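(* Consider the Gaussian broadcast model on $P=\mathbb{Z}_{\ge0}^2$ with $(\alpha_1,\alpha_2)=(1,1/2)$. For every integer $t\ge0$, the random variable $$\widehat\zeta:=\sum_{i=0}^t\binom{t}{i}X_{(i,t-i)}$$ maximizes $\zeta\mapsto \operatorname{Cov}(\zeta,X_0)/\sqrt{\operatorname{Var}(\zeta)}$ over all nonzero linear combinations $\zeta=\sum_{i=0}^t c_iX_{(i,t-i)}$ (with $c_i\in\mathbb R$ not all zero), and $$\frac{\operatorname{Cov}(\widehat\zeta,X_0)}{\sqrt{\operatorname{Var}(\widehat\zeta)}}=\frac{1}{\sqrt{\frac{t}{4^t}\binom{2t}{t}+1}}.$$
   Context: Gaussian broadcast model: Let $d\ge 0$ and let $P$ be an infinite graded poset with layers $L_0,L_1,\dots$ ($L_t$ = elements of rank $t$, $L_0$ = minimal elements), in which every element covers at most $d+1$ elements. For $v\in P$ let $\mathfrak p(v)$ be the set of elements covered by $v$. Given $\alpha_1,\dots,\alpha_{d+1}>0$, let $X_0\sim\mathcal N(0,1)$ and, independently, let $W_{u\to v}$ be i.i.d. $\mathcal N(0,1)$ indexed by covering pairs $u\lessdot v$. Set $X_v=X_0$ for $v\in L_0$, and for $v$ of rank $\ge1$ set $X_v=\alpha_{|\mathfrak p(v)|}\sum_{u\in\mathfrak p(v)}(X_u+W_{u\to v})$. Here $d=1$ and $P=\mathbb{Z}_{\ge0}^2$ with the componentwise order; $L_t=\{(i,t-i):0\le i\le t\}$; $|\mathfrak p(v)|$ is the number of positive coordinates of $v$. *)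

theory Defs
  imports "HOL-Probability.Probability"
begin

definition cover_pairs :: "((nat \<times> nat) \<times> (nat \<times> nat)) set" where
  "cover_pairs = {((i, j), (i', j')). (i' = Suc i \<and> j' = j) \<or> (i' = i \<and> j' = Suc j)}"

fun gbX :: "real \<Rightarrow> real \<Rightarrow> ('a \<Rightarrow> real) \<Rightarrow> ((nat \<times> nat) \<times> (nat \<times> nat) \<Rightarrow> 'a \<Rightarrow> real)
              \<Rightarrow> nat \<times> nat \<Rightarrow> 'a \<Rightarrow> real" where
  "gbX a1 a2 X0 W (0, 0) = X0"
| "gbX a1 a2 X0 W (Suc i, 0) =
     (\<lambda>\<omega>. a1 * (gbX a1 a2 X0 W (i, 0) \<omega> + W ((i, 0), (Suc i, 0)) \<omega>))"
| "gbX a1 a2 X0 W (0, Suc j) =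
     (\<lambda>\<omega>. a1 * (gbX a1 a2 X0 W (0, j) \<omega> + W ((0, j), (0, Suc j)) \<omega>))"
| "gbX a1 a2 X0 W (Suc i, Suc j) =
     (\<lambda>\<omega>. a2 * ((gbX a1 a2 X0 W (i, Suc j) \<omega> + W ((i, Suc j), (Suc i, Suc j)) \<omega>)
               + (gbX a1 a2 X0 W (Suc i, j) \<omega> + W ((Suc i, j), (Suc i, Suc j)) \<omega>)))"

definition Expect :: "'a measure \<Rightarrow> ('a \<Rightarrow> real) \<Rightarrow> real" where
  "Expect M X = integral\<^sup>L M X"

definition Cov :: "'a measure \<Rightarrow> ('a \<Rightarrow> real) \<Rightarrow> ('a \<Rightarrow> real) \<Rightarrow> real" where
  "Cov M X Y = integral\<^sup>L M (\<lambda>\<omega>. (X \<omega> - Expect M X) * (Y \<omega> - Expect M Y))"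

definition Var :: "'a measure \<Rightarrow> ('a \<Rightarrow> real) \<Rightarrow> real" where
  "Var M X = integral\<^sup>L M (\<lambda>\<omega>. (X \<omega> - Expect M X)\<^sup>2)"

end

theory Submission
  imports Defs
begin


definition le2 :: "nat \<times> nat \<Rightarrow> nat \<times> nat \<Rightarrow> bool" where
  "le2 v u \<longleftrightarrow> fst v \<le> fst u \<and> snd v \<le> snd u"

fun cf :: "nat \<times> nat \<Rightarrow> (nat \<times> nat) \<times> (nat \<times> nat) \<Rightarrow> real" where
  "cf (0, 0) e = 0"
| "cf (Suc i, 0) e = cf (i, 0) e + (if e = ((i, 0), (Suc i, 0)) then 1 else 0)"
| "cf (0, Suc j) e = cf (0, j) e + (if e = ((0, j), (0, Suc j)) then 1 else 0)"
| "cf (Suc i, Suc j) e = 1/2 * ((cf (i, Suc j) e + (if e = ((i, Suc j), (Suc i, Suc j)) then 1 else 0))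
     + (cf (Suc i, j) e + (if e = ((Suc i, j), (Suc i, Suc j)) then 1 else 0)))"

fun vis :: "nat \<times> nat \<Rightarrow> nat \<times> nat \<Rightarrow> real" where
  "vis (0, 0) v = (if v = (0, 0) then 1 else 0)"
| "vis (Suc i, 0) v = (if v = (Suc i, 0) then 1 else vis (i, 0) v)"
| "vis (0, Suc j) v = (if v = (0, Suc j) then 1 else vis (0, j) v)"
| "vis (Suc i, Suc j) v = (if v = (Suc i, Suc j) then 1 else 1/2 * (vis (i, Suc j) v + vis (Suc i, j) v))"

definition al :: "nat \<times> nat \<Rightarrow> real" where
  "al v = (if 0 < fst v \<and> 0 < snd v then 1/2 else 1)"

lemma pair_induct:
  assumes a1: "P (0,0)" and a2: "\<And>i. P (i,0) \<Longrightarrow> P (Suc i, 0)" and a3: "\<And>j. P (0,j) \<Longrightarrow> P (0, Suc j)"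
    and a4: "\<And>i j. P (i, Suc j) \<Longrightarrow> P (Suc i, j) \<Longrightarrow> P (Suc i, Suc j)"
  shows "P z"
proof -
  have "\<forall>i j. i + j = n \<longrightarrow> P (i,j)" for n
  proof (induction n rule: less_induct)
    case (less n)
    show ?case
    proof (intro allI impI)
      fix i j assume ij: "i + j = n"
      show "P (i,j)"
      proof (cases i)
        case 0
        then show ?thesis
        proof (cases j)
          case 0 then show ?thesis using \<open>i = 0\<close> a1 by simp
        next
          case (Suc j')
          have "P (0, j')" using less[of j'] ij \<open>i = 0\<close> Suc by simp
          then show ?thesis using a3 \<open>i = 0\<close> Suc by simp
        qed
      next
        case (Suc i')
        then show ?thesis
        proof (cases j)
          case 0
          have "P (i', 0)" using less[of i'] ij \<open>i = Suc i'\<close> 0 by simp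
          then show ?thesis using a2 \<open>i = Suc i'\<close> 0 by simp
        next
          case (Suc j')
          have "P (i', Suc j')" using less[of "i' + Suc j'"] ij \<open>i = Suc i'\<close> Suc by simp
          moreover have "P (Suc i', j')" using less[of "Suc i' + j'"] ij \<open>i = Suc i'\<close> Suc by simp
          ultimately show ?thesis using a4 \<open>i = Suc i'\<close> Suc by simp
        qed
      qed
    qed
  qed
  then show ?thesis by (cases z) blast
qed

lemma vis_zero: "\<not> le2 v u \<Longrightarrow> vis u v = 0"
  by (induction u v rule: vis.induct) (auto simp: le2_def)

lemma vis_self: "vis u u = 1"
  by (induction u rule: pair_induct) auto

lemma vis_origin: "vis u (0,0) = 1"
  by (induction u rule: pair_induct) auto

lemma cf_zero: "\<not> (e \<in> cover_pairs \<and> le2 (snd e) u) \<Longrightarrow> cf u e = 0"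
proof (induction u arbitrary: e rule: pair_induct)
  case 1
  then show ?case by simp
next
  case (2 i)
  have "\<not> (e \<in> cover_pairs \<and> le2 (snd e) (i,0))" using 2(2) by (auto simp: le2_def)
  moreover have "e \<noteq> ((i,0),(Suc i,0))" using 2(2) by (auto simp: le2_def cover_pairs_def)
  ultimately show ?case using 2(1) by simp
next
  case (3 j)
  have "\<not> (e \<in> cover_pairs \<and> le2 (snd e) (0,j))" using 3(2) by (auto simp: le2_def)
  moreover have "e \<noteq> ((0,j),(0,Suc j))" using 3(2) by (auto simp: le2_def cover_pairs_def)
  ultimately show ?case using 3(1) by simp
next
  case (4 i j)
  have "\<not> (e \<in> cover_pairs \<and> le2 (snd e) (i,Suc j))" using 4(3) by (auto simp: le2_def)
  moreover have "\<not> (e \<in> cover_pairs \<and> le2 (snd e) (Suc i,j))" using 4(3) by (auto simp: le2_def)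
  moreover have "e \<noteq> ((i,Suc j),(Suc i,Suc j))" using 4(3) by (auto simp: le2_def cover_pairs_def)
  moreover have "e \<noteq> ((Suc i,j),(Suc i,Suc j))" using 4(3) by (auto simp: le2_def cover_pairs_def)
  ultimately show ?case using 4(1) 4(2) by simp
qed

lemma cf_vis: "(p, v) \<in> cover_pairs \<Longrightarrow> cf u (p, v) = al v * vis u v"
proof (induction u arbitrary: p v rule: pair_induct)
  case 1
  then show ?case by (auto simp: cover_pairs_def)
next
  case (2 i)
  show ?case
  proof (cases "v = (Suc i, 0)")
    case True
    with 2 have "p = (i,0)" by (auto simp: cover_pairs_def)
    then show ?thesis using True 2 vis_zero[of "(Suc i, 0)" "(i,0)"] by (simp add: al_def le2_def)
  next
    case False
    then show ?thesis using 2 by auto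
  qed
next
  case (3 j)
  show ?case
  proof (cases "v = (0, Suc j)")
    case True
    with 3 have "p = (0,j)" by (auto simp: cover_pairs_def)
    then show ?thesis using True 3 vis_zero[of "(0, Suc j)" "(0,j)"] by (simp add: al_def le2_def)
  next
    case False
    then show ?thesis using 3 by auto
  qed
next
  case (4 i j)
  show ?case
  proof (cases "v = (Suc i, Suc j)")
    case True
    with 4 have "p = (i, Suc j) \<or> p = (Suc i, j)" by (auto simp: cover_pairs_def)
    then show ?thesis using True 4 vis_zero[of "(Suc i, Suc j)" "(i,Suc j)"] vis_zero[of "(Suc i, Suc j)" "(Suc i,j)"]
      by (auto simp: al_def le2_def)
  next
    case False
    then show ?thesis using 4 by (auto simp: algebra_simps)
  qed
qed

lemma vis_fc: "vis u v = (if v = u then 1 else 0)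
   + al (Suc (fst v), snd v) * vis u (Suc (fst v), snd v)
   + al (fst v, Suc (snd v)) * vis u (fst v, Suc (snd v))"
proof (induction u arbitrary: v rule: pair_induct)
  case 1
  then show ?case by auto
next
  case (2 i)
  show ?case
  proof (cases "v = (Suc i, 0)")
    case True
    then show ?thesis using vis_zero[of "(Suc (Suc i), 0)" "(Suc i,0)"] vis_zero[of "(Suc i, Suc 0)" "(i,0)"]
      vis_zero[of "(Suc i, Suc 0)" "(Suc i,0)"]
      by (simp add: le2_def)
  next
    case False
    show ?thesis
    proof (cases "v = (i,0)")
      case True
      then show ?thesis using vis_zero[of "(i, Suc 0)" "(i,0)"] by (simp add: le2_def al_def vis_self)
    next
      case F2: False
      have "vis (Suc i, 0) (Suc (fst v), snd v) = vis (i,0) (Suc (fst v), snd v)"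
        using F2 by (cases v) auto
      moreover have "vis (Suc i, 0) (fst v, Suc (snd v)) = vis (i,0) (fst v, Suc (snd v))"
        by (cases v) auto
      ultimately show ?thesis using False F2 2[of v] by simp
    qed
  qed
next
  case (3 j)
  show ?case
  proof (cases "v = (0, Suc j)")
    case True
    then show ?thesis using vis_zero[of "(0, Suc (Suc j))" "(0, Suc j)"] vis_zero[of "(Suc 0, Suc j)" "(0,j)"]
      vis_zero[of "(Suc 0, Suc j)" "(0, Suc j)"]
      by (simp add: le2_def)
  next
    case False
    show ?thesis
    proof (cases "v = (0,j)")
      case True
      then show ?thesis using vis_zero[of "(Suc 0, j)" "(0,j)"] by (simp add: le2_def al_def vis_self)
    next
      case F2: False
      have "vis (0, Suc j) (Suc (fst v), snd v) = vis (0,j) (Suc (fst v), snd v)"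
        by (cases v) auto
      moreover have "vis (0, Suc j) (fst v, Suc (snd v)) = vis (0,j) (fst v, Suc (snd v))"
        using F2 by (cases v) auto
      ultimately show ?thesis using False F2 3[of v] by simp
    qed
  qed
next
  case (4 i j)
  define w1 where "w1 = (Suc (fst v), snd v)"
  define w2 where "w2 = (fst v, Suc (snd v))"
  have h: "vis (Suc i, Suc j) w = (if w = (Suc i, Suc j) then 1 else 0)
      + 1/2 * (vis (i, Suc j) w + vis (Suc i, j) w)" for w
    using vis_zero[of "(Suc i, Suc j)" "(i, Suc j)"] vis_zero[of "(Suc i, Suc j)" "(Suc i, j)"]
    by (auto simp: le2_def)
  have A: "vis (i, Suc j) v = (if v = (i, Suc j) then 1 else 0) + al w1 * vis (i, Suc j) w1 + al w2 * vis (i, Suc j) w2"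
    using 4(1)[of v] unfolding w1_def w2_def .
  have B: "vis (Suc i, j) v = (if v = (Suc i, j) then 1 else 0) + al w1 * vis (Suc i, j) w1 + al w2 * vis (Suc i, j) w2"
    using 4(2)[of v] unfolding w1_def w2_def .
  have C: "al w1 * (if w1 = (Suc i, Suc j) then 1 else 0) + al w2 * (if w2 = (Suc i, Suc j) then 1 else 0)
      = 1/2 * ((if v = (i, Suc j) then 1 else 0) + (if v = (Suc i, j) then 1 else 0))"
    by (cases v) (auto simp: w1_def w2_def al_def)
  show ?case
    unfolding w1_def[symmetric] w2_def[symmetric]
    using h[of v] h[of w1] h[of w2] A B C
    by (auto simp: algebra_simps)
qed

definition EN :: "nat \<Rightarrow> ((nat \<times> nat) \<times> (nat \<times> nat)) set" where
  "EN N = {e \<in> cover_pairs. le2 (snd e) (N,N)}"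

lemma finite_EN: "finite (EN N)"
proof -
  have "EN N \<subseteq> ({..N} \<times> {..N}) \<times> ({..N} \<times> {..N})"
    by (auto simp: EN_def cover_pairs_def le2_def)
  then show ?thesis by (rule finite_subset) auto
qed

definition K :: "nat \<Rightarrow> nat \<times> nat \<Rightarrow> nat \<times> nat \<Rightarrow> real" where
  "K N v u = (\<Sum>e\<in>EN N. cf v e * cf u e)"

lemma ind_sum:
  assumes "le2 u (N,N)"
  shows "(\<Sum>e\<in>EN N. (if e = ed then 1 else 0) * cf u e) = cf u ed"
proof (cases "ed \<in> EN N")
  case True
  have "(\<Sum>e\<in>EN N. (if e = ed then 1 else 0) * cf u e) = (\<Sum>e\<in>EN N. if e = ed then cf u e else 0)"
    by (rule sum.cong) auto
  then show ?thesis using True by (simp add: sum.delta[OF finite_EN])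
next
  case False
  then have "\<not> (ed \<in> cover_pairs \<and> le2 (snd ed) u)" using assms by (auto simp: EN_def le2_def)
  then have "cf u ed = 0" by (rule cf_zero)
  moreover have "(\<Sum>e\<in>EN N. (if e = ed then 1 else 0) * cf u e) = 0"
    using False by (intro sum.neutral) auto
  ultimately show ?thesis by simp
qed

lemma K_00: "K N (0,0) u = 0"
  by (simp add: K_def)

lemma K_S0:
  assumes "le2 u (N,N)"
  shows "K N (Suc i,0) u = K N (i,0) u + vis u (Suc i, 0)"
proof -
  have "K N (Suc i,0) u = K N (i,0) u + (\<Sum>e\<in>EN N. (if e = ((i,0),(Suc i,0)) then 1 else 0) * cf u e)"
    by (simp add: K_def sum.distrib distrib_right)
  also have "\<dots> = K N (i,0) u + cf u ((i,0),(Suc i,0))" using ind_sum[OF assms] by simp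
  also have "cf u ((i,0),(Suc i,0)) = vis u (Suc i, 0)"
    by (subst cf_vis) (auto simp: cover_pairs_def al_def)
  finally show ?thesis .
qed

lemma K_0S:
  assumes "le2 u (N,N)"
  shows "K N (0,Suc j) u = K N (0,j) u + vis u (0, Suc j)"
proof -
  have "K N (0,Suc j) u = K N (0,j) u + (\<Sum>e\<in>EN N. (if e = ((0,j),(0,Suc j)) then 1 else 0) * cf u e)"
    by (simp add: K_def sum.distrib distrib_right)
  also have "\<dots> = K N (0,j) u + cf u ((0,j),(0,Suc j))" using ind_sum[OF assms] by simp
  also have "cf u ((0,j),(0,Suc j)) = vis u (0, Suc j)"
    by (subst cf_vis) (auto simp: cover_pairs_def al_def)
  finally show ?thesis .
qed

lemma K_SS:
  assumes "le2 u (N,N)"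
  shows "K N (Suc i,Suc j) u = 1/2 * (K N (i,Suc j) u + K N (Suc i,j) u) + 1/2 * vis u (Suc i, Suc j)"
proof -
  let ?e1 = "((i,Suc j),(Suc i,Suc j))" and ?e2 = "((Suc i,j),(Suc i,Suc j))"
  have "K N (Suc i,Suc j) u = 1/2 * (K N (i,Suc j) u + K N (Suc i,j) u)
     + 1/2 * ((\<Sum>e\<in>EN N. (if e = ?e1 then 1 else 0) * cf u e) + (\<Sum>e\<in>EN N. (if e = ?e2 then 1 else 0) * cf u e))"
    by (simp add: K_def sum.distrib distrib_right sum_distrib_left algebra_simps)
  also have "\<dots> = 1/2 * (K N (i,Suc j) u + K N (Suc i,j) u) + 1/2 * (cf u ?e1 + cf u ?e2)"
    using ind_sum[OF assms] by simp
  also have "cf u ?e1 = 1/2 * vis u (Suc i, Suc j)"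
    by (subst cf_vis) (auto simp: cover_pairs_def al_def)
  also have "cf u ?e2 = 1/2 * vis u (Suc i, Suc j)"
    by (subst cf_vis) (auto simp: cover_pairs_def al_def)
  finally show ?thesis by simp
qed

definition Q :: "nat \<times> nat \<Rightarrow> real" where
  "Q z = real ((fst z + snd z) choose fst z) / 2 ^ (fst z + snd z)"

lemma Q_SS: "Q (Suc i, Suc j) = 1/2 * (Q (i, Suc j) + Q (Suc i, j))"
proof -
  have "Suc i + Suc j = Suc (Suc (i + j))" by simp
  have c: "(Suc (Suc (i + j)) choose Suc i) = (Suc (i+j) choose i) + (Suc (i+j) choose Suc i)"
    by simp
  show ?thesis unfolding Q_def
    by (simp add: c field_simps)
qed

lemma FR:
  assumes "le2 u (N,N)"
  shows "\<not> le2 u z \<Longrightarrow> K N (Suc (fst z), snd z) u + K N (fst z, Suc (snd z)) u - 2 * K N z u = Q z"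
proof (induction z rule: pair_induct)
  case 1
  have "u \<noteq> (0,0)" using 1 by (auto simp: le2_def)
  then have "vis u (0,0) = vis u (1,0) + vis u (0,1)"
    using vis_fc[of u "(0,0)"] by (simp add: al_def)
  then show ?case using K_S0[OF assms, of 0] K_0S[OF assms, of 0] K_00[of N u] vis_origin[of u]
    by (simp add: Q_def)
next
  case (2 i)
  have IH: "K N (Suc i, 0) u + K N (i, Suc 0) u - 2 * K N (i,0) u = Q (i,0)"
    using 2 by (auto simp: le2_def)
  have "u \<noteq> (Suc i,0)" using 2 by (auto simp: le2_def)
  then have fc: "vis u (Suc i,0) = vis u (Suc (Suc i),0) + 1/2 * vis u (Suc i, Suc 0)"
    using vis_fc[of u "(Suc i,0)"] by (simp add: al_def)
  have q: "Q (Suc i, 0) = Q (i,0) / 2" by (simp add: Q_def)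
  show ?case using IH fc q K_S0[OF assms, of "Suc i"] K_S0[OF assms, of i] K_SS[OF assms, of i 0]
    by (simp add: algebra_simps)
next
  case (3 j)
  have IH: "K N (Suc 0, j) u + K N (0, Suc j) u - 2 * K N (0,j) u = Q (0,j)"
    using 3 by (auto simp: le2_def)
  have "u \<noteq> (0, Suc j)" using 3 by (auto simp: le2_def)
  then have fc: "vis u (0, Suc j) = 1/2 * vis u (Suc 0, Suc j) + vis u (0, Suc (Suc j))"
    using vis_fc[of u "(0, Suc j)"] by (simp add: al_def)
  have q: "Q (0, Suc j) = Q (0, j) / 2" by (simp add: Q_def)
  show ?case using IH fc q K_0S[OF assms, of "Suc j"] K_0S[OF assms, of j] K_SS[OF assms, of 0 j]
    by (simp add: algebra_simps)
next
  case (4 i j)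
  have IH1: "K N (Suc i, Suc j) u + K N (i, Suc (Suc j)) u - 2 * K N (i, Suc j) u = Q (i, Suc j)"
    using 4 by (auto simp: le2_def)
  have IH2: "K N (Suc (Suc i), j) u + K N (Suc i, Suc j) u - 2 * K N (Suc i, j) u = Q (Suc i, j)"
    using 4 by (auto simp: le2_def)
  have "u \<noteq> (Suc i, Suc j)" using 4 by (auto simp: le2_def)
  then have fc: "vis u (Suc i, Suc j) = 1/2 * vis u (Suc (Suc i), Suc j) + 1/2 * vis u (Suc i, Suc (Suc j))"
    using vis_fc[of u "(Suc i, Suc j)"] by (simp add: al_def)
  show ?case using IH1 IH2 fc Q_SS[of i j] K_SS[OF assms, of "Suc i" j] K_SS[OF assms, of i "Suc j"]
    K_SS[OF assms, of i j]
    by (simp add: algebra_simps)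
qed

definition Gf :: "nat \<Rightarrow> nat \<times> nat \<Rightarrow> real" where
  "Gf t z = (\<Sum>k\<le>t. real (t choose k) * K t z (k, t - k))"

lemma sum_choose_real: "(\<Sum>k\<le>t. real (t choose k)) = 2 ^ t"
proof -
  have "(\<Sum>k\<le>t. real (t choose k)) = real (\<Sum>k\<le>t. t choose k)" by simp
  also have "\<dots> = 2 ^ t" by (simp add: choose_row_sum)
  finally show ?thesis .
qed

lemma FRG:
  assumes "fst z + snd z < t"
  shows "Gf t (Suc (fst z), snd z) + Gf t (fst z, Suc (snd z)) - 2 * Gf t z = 2 ^ t * Q z"
proof -
  have "Gf t (Suc (fst z), snd z) + Gf t (fst z, Suc (snd z)) - 2 * Gf t z
      = (\<Sum>k\<le>t. real (t choose k) * (K t (Suc (fst z), snd z) (k, t-k) + K t (fst z, Suc (snd z)) (k, t-k) - 2 * K t z (k, t-k)))"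
    by (simp add: Gf_def sum.distrib sum_subtractf sum_distrib_left algebra_simps)
  also have "\<dots> = (\<Sum>k\<le>t. real (t choose k) * Q z)"
  proof (rule sum.cong)
    fix k assume k: "k \<in> {..t}"
    have "le2 (k, t-k) (t,t)" using k by (auto simp: le2_def)
    moreover have "\<not> le2 (k, t-k) z" using k assms by (auto simp: le2_def)
    ultimately show "real (t choose k) * (K t (Suc (fst z), snd z) (k, t-k) + K t (fst z, Suc (snd z)) (k, t-k) - 2 * K t z (k, t-k))
        = real (t choose k) * Q z" using FR by simp
  qed simp
  also have "\<dots> = 2 ^ t * Q z" by (simp add: sum_distrib_right[symmetric] sum_choose_real)
  finally show ?thesis .
qed

lemma vis_layer:
  assumes "k \<le> t" "fst x + snd x = t"
  shows "vis (k, t - k) x = (if k = fst x then 1 else 0)"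
proof (cases "k = fst x")
  case True
  then have "(k, t-k) = x" using assms by (cases x) auto
  then show ?thesis using True vis_self by simp
next
  case False
  then have "\<not> le2 x (k, t-k)" using assms by (cases x) (auto simp: le2_def)
  then show ?thesis using False vis_zero by simp
qed

lemma sum_vis_layer:
  assumes "fst x + snd x = t"
  shows "(\<Sum>k\<le>t. real (t choose k) * vis (k, t - k) x) = real (t choose fst x)"
proof -
  have "(\<Sum>k\<le>t. real (t choose k) * vis (k, t - k) x) = (\<Sum>k\<le>t. if k = fst x then real (t choose k) else 0)"
    by (rule sum.cong) (use assms vis_layer in auto)
  also have "\<dots> = real (t choose fst x)" using assms by (simp add: sum.delta)
  finally show ?thesis .
qed

lemma BRG_SS:
  assumes "Suc i + Suc j = t"
  shows "Gf t (Suc i, Suc j) = 1/2 * (Gf t (i, Suc j) + Gf t (Suc i, j)) + 1/2 * real (t choose Suc i)"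
proof -
  have "Gf t (Suc i, Suc j) = (\<Sum>k\<le>t. real (t choose k) * (1/2 * (K t (i, Suc j) (k,t-k) + K t (Suc i, j) (k,t-k)) + 1/2 * vis (k, t-k) (Suc i, Suc j)))"
    unfolding Gf_def by (rule sum.cong) (auto simp: K_SS le2_def)
  also have "\<dots> = 1/2 * (Gf t (i, Suc j) + Gf t (Suc i, j)) + 1/2 * (\<Sum>k\<le>t. real (t choose k) * vis (k, t - k) (Suc i, Suc j))"
    by (simp add: Gf_def sum.distrib sum_distrib_left algebra_simps)
  also have "(\<Sum>k\<le>t. real (t choose k) * vis (k, t - k) (Suc i, Suc j)) = real (t choose Suc i)"
    using sum_vis_layer[of "(Suc i, Suc j)" t] assms by simp
  finally show ?thesis .
qed

lemma BRG_0S: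
  assumes "Suc j = t"
  shows "Gf t (0, Suc j) = Gf t (0, j) + 1"
proof -
  have "Gf t (0, Suc j) = (\<Sum>k\<le>t. real (t choose k) * (K t (0, j) (k,t-k) + vis (k, t-k) (0, Suc j)))"
    unfolding Gf_def by (rule sum.cong) (auto simp: K_0S le2_def)
  also have "\<dots> = Gf t (0, j) + (\<Sum>k\<le>t. real (t choose k) * vis (k, t - k) (0, Suc j))"
    by (simp add: Gf_def sum.distrib sum_distrib_left algebra_simps)
  also have "(\<Sum>k\<le>t. real (t choose k) * vis (k, t - k) (0, Suc j)) = 1"
    using sum_vis_layer[of "(0, Suc j)" t] assms by simp
  finally show ?thesis .
qed

lemma Gf_const:
  assumes "i \<le> t"
  shows "Gf t (i, t - i) = Gf t (0, t)"
proof (cases t)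
  case 0
  then show ?thesis using assms by simp
next
  case (Suc m)
  have step: "Suc i \<le> t \<longrightarrow> Gf t (Suc i, t - Suc i) = Gf t (i, t - i)" for i
  proof (induction i)
    case 0
    show ?case
    proof
      have b: "Gf t (0, Suc m) = Gf t (0, m) + 1" using BRG_0S[of m t] Suc by simp
      have f: "Gf t (Suc 0, m) + Gf t (0, Suc m) - 2 * Gf t (0, m) = 2 ^ t * Q (0, m)"
        using FRG[of "(0,m)" t] Suc by simp
      have q: "2 ^ t * Q (0, m) = 2" using Suc by (simp add: Q_def)
      show "Gf t (Suc 0, t - Suc 0) = Gf t (0, t - 0)" using b f q Suc by simp
    qed
  next
    case (Suc i')
    show ?case
    proof
      assume le: "Suc (Suc i') \<le> t"
      define j where "j = m - Suc i'"
      have ij: "i' + Suc j = m" using le \<open>t = Suc m\<close> by (simp add: j_def)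
      have IH: "Gf t (Suc i', t - Suc i') = Gf t (i', t - i')" using Suc.IH le by simp
      have e1: "t - Suc i' = Suc j" and e2: "t - i' = Suc (Suc j)" and e3: "t - Suc (Suc i') = j"
        using ij \<open>t = Suc m\<close> by auto
      have br: "Gf t (Suc i', Suc j) = 1/2 * (Gf t (i', Suc j) + Gf t (Suc i', j)) + 1/2 * real (t choose Suc i')"
        using BRG_SS[of i' j t] ij \<open>t = Suc m\<close> by simp
      have f1: "Gf t (Suc i', Suc j) + Gf t (i', Suc (Suc j)) - 2 * Gf t (i', Suc j) = 2 ^ t * Q (i', Suc j)"
        using FRG[of "(i', Suc j)" t] ij \<open>t = Suc m\<close> by simp
      have f2: "Gf t (Suc (Suc i'), j) + Gf t (Suc i', Suc j) - 2 * Gf t (Suc i', j) = 2 ^ t * Q (Suc i', j)"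
        using FRG[of "(Suc i', j)" t] ij \<open>t = Suc m\<close> by simp
      have q: "2 ^ t * Q (i', Suc j) + 2 ^ t * Q (Suc i', j) = 2 * real (t choose Suc i')"
      proof -
        have "i' + Suc j = m" "Suc i' + j = m" using ij by auto
        then have "2 ^ t * Q (i', Suc j) + 2 ^ t * Q (Suc i', j) = 2 * (real (m choose i') + real (m choose Suc i'))"
          using \<open>t = Suc m\<close> by (simp add: Q_def field_simps)
        also have "\<dots> = 2 * real (t choose Suc i')" using \<open>t = Suc m\<close> by simp
        finally show ?thesis .
      qed
      show "Gf t (Suc (Suc i'), t - Suc (Suc i')) = Gf t (Suc i', t - Suc i')"
        unfolding e1 e3 using br f1 f2 q IH[unfolded e1 e2] by (simp add: algebra_simps)
    qed
  qed
  have "i \<le> t \<longrightarrow> Gf t (i, t - i) = Gf t (0, t)"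
  proof (induction i)
    case 0 show ?case by simp
  next
    case (Suc i) then show ?case using step[of i] by auto
  qed
  then show ?thesis using assms by simp
qed

lemma pascal_sum:
  fixes g :: "nat \<Rightarrow> real"
  shows "(\<Sum>k\<le>Suc n. real (Suc n choose k) * g k) = (\<Sum>k\<le>n. real (n choose k) * g k) + (\<Sum>k\<le>n. real (n choose k) * g (Suc k))"
proof -
  have "(\<Sum>k\<le>Suc n. real (Suc n choose k) * g k) = g 0 + (\<Sum>k\<le>n. real (Suc n choose Suc k) * g (Suc k))"
    by (subst sum.atMost_Suc_shift) simp
  also have "\<dots> = g 0 + (\<Sum>k\<le>n. real (n choose Suc k) * g (Suc k)) + (\<Sum>k\<le>n. real (n choose k) * g (Suc k))"
    by (simp add: sum.distrib distrib_right)
  also have "g 0 + (\<Sum>k\<le>n. real (n choose Suc k) * g (Suc k)) = (\<Sum>k\<le>Suc n. real (n choose k) * g k)"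
    by (subst sum.atMost_Suc_shift) simp
  also have "\<dots> = (\<Sum>k\<le>n. real (n choose k) * g k)" by simp
  finally show ?thesis .
qed

definition Tn :: "nat \<Rightarrow> nat \<Rightarrow> real" where
  "Tn t n = (\<Sum>k\<le>n. real (n choose k) * Gf t (k, n - k))"

lemma sum_sq_choose_real: "(\<Sum>k\<le>n. real (n choose k) * real (n choose k)) = real ((2*n) choose n)"
proof -
  have "(\<Sum>k\<le>n. real (n choose k) * real (n choose k)) = real (\<Sum>k\<le>n. (n choose k)^2)"
    by (simp add: power2_eq_square)
  also have "\<dots> = real ((2*n) choose n)" by (simp add: choose_square_sum)
  finally show ?thesis .
qed

lemma T_step:
  assumes "n < t"
  shows "Tn t (Suc n) = 2 * Tn t n + 2 ^ t * real ((2*n) choose n) / 2 ^ n"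
proof -
  have "Tn t (Suc n) = (\<Sum>k\<le>n. real (n choose k) * Gf t (k, Suc n - k)) + (\<Sum>k\<le>n. real (n choose k) * Gf t (Suc k, Suc n - Suc k))"
    unfolding Tn_def by (rule pascal_sum)
  also have "\<dots> = (\<Sum>k\<le>n. real (n choose k) * (Gf t (Suc k, n - k) + Gf t (k, Suc (n - k))))"
    by (simp add: sum.distrib distrib_left Suc_diff_le)
  also have "\<dots> = (\<Sum>k\<le>n. real (n choose k) * (2 * Gf t (k, n - k) + 2 ^ t * real (n choose k) / 2 ^ n))"
  proof (rule sum.cong)
    fix k assume k: "k \<in> {..n}"
    have "Gf t (Suc k, n - k) + Gf t (k, Suc (n - k)) - 2 * Gf t (k, n-k) = 2 ^ t * Q (k, n-k)"
      using FRG[of "(k, n-k)" t] k assms by simp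
    moreover have "Q (k, n-k) = real (n choose k) / 2 ^ n" using k by (simp add: Q_def)
    ultimately show "real (n choose k) * (Gf t (Suc k, n - k) + Gf t (k, Suc (n - k)))
        = real (n choose k) * (2 * Gf t (k, n - k) + 2 ^ t * real (n choose k) / 2 ^ n)" by simp
  qed simp
  also have "\<dots> = 2 * Tn t n + 2 ^ t / 2 ^ n * (\<Sum>k\<le>n. real (n choose k) * real (n choose k))"
    by (simp add: Tn_def sum.distrib sum_distrib_left algebra_simps)
  also have "\<dots> = 2 * Tn t n + 2 ^ t * real ((2*n) choose n) / 2 ^ n"
    by (simp add: sum_sq_choose_real)
  finally show ?thesis .
qed

lemma central_rec: "real (Suc n) * real ((2 * Suc n) choose Suc n) = 2 * (2 * real n + 1) * real ((2*n) choose n)"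
proof -
  define A where "A = (Suc (Suc (2*n)) choose Suc n)"
  define B where "B = (Suc (2*n) choose n)"
  define B' where "B' = (Suc (2*n) choose Suc n)"
  define C where "C = ((2*n) choose n)"
  have a: "Suc n * A = Suc (Suc (2*n)) * B"
    unfolding A_def B_def by (rule Suc_times_binomial)
  have b: "Suc n * B' = Suc (2*n) * C"
    unfolding B'_def C_def by (rule Suc_times_binomial)
  have c: "Suc n * (Suc (n + n) choose Suc n) = Suc n * (Suc (n + n) choose n)"
    by (rule Suc_times_binomial_add)
  have sn: "Suc n \<noteq> 0" by simp
  have c0: "(Suc (n + n) choose Suc n) = (Suc (n + n) choose n)"
    using mult_left_cancel[OF sn, THEN iffD1, OF c] .
  have c': "B' = B" unfolding B'_def B_def mult_2 using c0 .
  have "real (Suc n) * real A = real (Suc (Suc (2*n))) * real B"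
    using arg_cong[OF a, of real] by (simp only: of_nat_mult)
  then have ra: "real (Suc n) * real A = (2 * real n + 2) * real B" by simp
  have "real (Suc n) * real B = real (Suc (2*n)) * real C"
    using arg_cong[OF b, of real] c' by (simp only: of_nat_mult)
  then have rb: "real (Suc n) * real B = (2 * real n + 1) * real C" by simp
  have "real (Suc n) * (real (Suc n) * real A) = real (Suc n) * ((2 * real n + 2) * real B)" using ra by simp
  also have "\<dots> = (2 * real n + 2) * (real (Suc n) * real B)" by (simp add: ac_simps)
  also have "\<dots> = (2 * real n + 2) * ((2 * real n + 1) * real C)" using rb by simp
  also have "\<dots> = real (Suc n) * (2 * (2 * real n + 1) * real C)" by (simp add: algebra_simps)
  finally have "real (Suc n) * (real (Suc n) * real A) = real (Suc n) * (2 * (2 * real n + 1) * real C)" .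
  then have "real (Suc n) * real A = 2 * (2 * real n + 1) * real C" by simp
  moreover have "(2 * Suc n choose Suc n) = A" unfolding A_def by simp
  ultimately show ?thesis unfolding C_def by simp
qed

lemma S_closed: "(\<Sum>m<n. real ((2*m) choose m) / 4 ^ m) = 2 * real n * real ((2*n) choose n) / 4 ^ n"
proof (induction n)
  case 0 then show ?case by simp
next
  case (Suc n)
  have cr: "real (Suc n) * real ((2 * Suc n) choose Suc n) = 2 * (2 * real n + 1) * real ((2*n) choose n)"
    by (rule central_rec)
  have "(\<Sum>m<Suc n. real ((2*m) choose m) / 4 ^ m) = 2 * real n * real ((2*n) choose n) / 4 ^ n + real ((2*n) choose n) / 4 ^ n"
    using Suc by simp
  also have "\<dots> = (2 * real n + 1) * real ((2*n) choose n) / 4 ^ n" by (simp add: field_simps)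
  also have "\<dots> = 2 * (2 * (2 * real n + 1) * real ((2*n) choose n)) / 4 ^ Suc n"
    by (simp add: field_simps)
  also have "\<dots> = 2 * (real (Suc n) * real ((2 * Suc n) choose Suc n)) / 4 ^ Suc n"
    by (simp only: cr)
  finally show ?case by (simp only: mult.assoc)
qed

lemma T_closed: "n \<le> t \<Longrightarrow> Tn t n = 2 ^ t * 2 ^ n * (\<Sum>m<n. real ((2*m) choose m) / 4 ^ m) / 2"
proof (induction n)
  case 0
  then show ?case by (simp add: Tn_def Gf_def K_00)
next
  case (Suc n)
  then have "Tn t (Suc n) = 2 * Tn t n + 2 ^ t * real ((2*n) choose n) / 2 ^ n" using T_step by simp
  also have "\<dots> = 2 ^ t * 2 ^ n * (\<Sum>m<n. real ((2*m) choose m) / 4 ^ m) + 2 ^ t * real ((2*n) choose n) / 2 ^ n"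
    using Suc by simp
  also have "\<dots> = 2 ^ t * 2 ^ Suc n * (\<Sum>m<Suc n. real ((2*m) choose m) / 4 ^ m) / 2"
  proof -
    have "(4::real) ^ n = 2 ^ n * 2 ^ n" by (simp add: power_mult_distrib[symmetric])
    then show ?thesis by (simp add: field_simps)
  qed
  finally show ?case .
qed

definition lam :: "nat \<Rightarrow> real" where
  "lam t = real t * real ((2*t) choose t) / 2 ^ t"

lemma Gf_value:
  assumes "i \<le> t"
  shows "Gf t (i, t - i) = lam t"
proof -
  have "Tn t t = (\<Sum>k\<le>t. real (t choose k) * Gf t (0, t))"
    unfolding Tn_def by (rule sum.cong) (simp_all add: Gf_const)
  also have "\<dots> = 2 ^ t * Gf t (0, t)" by (simp add: sum_distrib_right[symmetric] sum_choose_real)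
  finally have a: "Tn t t = 2 ^ t * Gf t (0, t)" .
  have "Tn t t = 2 ^ t * 2 ^ t * (2 * real t * real ((2*t) choose t) / 4 ^ t) / 2"
    using T_closed[of t t] S_closed[of t] by simp
  also have "\<dots> = real t * real ((2*t) choose t)"
  proof -
    have "(4::real) ^ t = 2 ^ t * 2 ^ t" by (simp add: power_mult_distrib[symmetric])
    then show ?thesis by simp
  qed
  finally have "2 ^ t * Gf t (0, t) = real t * real ((2*t) choose t)" using a by simp
  then have "Gf t (0, t) = lam t" by (simp add: lam_def field_simps)
  then show ?thesis using Gf_const[OF assms] by simp
qed

definition acoef :: "nat \<Rightarrow> (nat \<Rightarrow> real) \<Rightarrow> (nat \<times> nat) \<times> (nat \<times> nat) \<Rightarrow> real" where
  "acoef t c e = (\<Sum>i\<le>t. c i * cf (i, t - i) e)"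

definition chat :: "nat \<Rightarrow> nat \<Rightarrow> real" where
  "chat t i = real (t choose i)"

lemma cross_sum:
  "(\<Sum>e\<in>EN t. acoef t c e * acoef t (chat t) e) = lam t * (\<Sum>i\<le>t. c i)"
proof -
  have "(\<Sum>e\<in>EN t. acoef t c e * acoef t (chat t) e)
      = (\<Sum>e\<in>EN t. \<Sum>i\<le>t. \<Sum>k\<le>t. c i * chat t k * (cf (i, t-i) e * cf (k, t-k) e))"
    unfolding acoef_def sum_product by (intro sum.cong refl) (simp add: algebra_simps)
  also have "\<dots> = (\<Sum>i\<le>t. \<Sum>k\<le>t. \<Sum>e\<in>EN t. c i * chat t k * (cf (i, t-i) e * cf (k, t-k) e))"
    by (simp add: sum.swap[of _ "EN t"])
  also have "\<dots> = (\<Sum>i\<le>t. c i * Gf t (i, t - i))"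
    unfolding Gf_def K_def chat_def by (simp add: sum_distrib_left algebra_simps)
  also have "\<dots> = (\<Sum>i\<le>t. c i * lam t)"
    by (rule sum.cong) (simp_all add: Gf_value)
  also have "\<dots> = lam t * (\<Sum>i\<le>t. c i)" by (simp add: sum_distrib_left mult.commute)
  finally show ?thesis .
qed

lemma sum_chat: "(\<Sum>i\<le>t. chat t i) = 2 ^ t"
  unfolding chat_def by (rule sum_choose_real)

lemma Q_lower:
  "(\<Sum>e\<in>EN t. (acoef t c e)\<^sup>2) \<ge> lam t * (\<Sum>i\<le>t. c i)\<^sup>2 / 2 ^ t"
proof -
  define s where "s = (\<Sum>i\<le>t. c i)"
  define mu :: real where "mu = s / 2 ^ t"
  have qh: "(\<Sum>e\<in>EN t. (acoef t (chat t) e)\<^sup>2) = lam t * 2 ^ t"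
    using cross_sum[of t "chat t"] sum_chat[of t] by (simp add: power2_eq_square)
  have cr: "(\<Sum>e\<in>EN t. acoef t c e * acoef t (chat t) e) = lam t * s"
    using cross_sum[of t c] by (simp add: s_def)
  have "0 \<le> (\<Sum>e\<in>EN t. (acoef t c e - mu * acoef t (chat t) e)\<^sup>2)"
    by (rule sum_nonneg) simp
  also have "\<dots> = (\<Sum>e\<in>EN t. (acoef t c e)\<^sup>2) - 2 * mu * (\<Sum>e\<in>EN t. acoef t c e * acoef t (chat t) e)
       + mu\<^sup>2 * (\<Sum>e\<in>EN t. (acoef t (chat t) e)\<^sup>2)"
    by (simp add: power2_diff sum.distrib sum_subtractf sum_distrib_left algebra_simps power_mult_distrib)
  also have "\<dots> = (\<Sum>e\<in>EN t. (acoef t c e)\<^sup>2) - lam t * s\<^sup>2 / 2 ^ t"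
    unfolding cr qh mu_def by (simp add: power2_eq_square field_simps)
  finally show ?thesis by (simp add: s_def)
qed

lemma final_ineq:
  fixes s q S l :: real
  assumes S: "S > 0" and l: "l \<ge> 0" and q: "q \<ge> l * s\<^sup>2 / S" and q0: "q \<ge> 0"
  shows "s / sqrt (s\<^sup>2 + q) \<le> S / sqrt (S\<^sup>2 + l * S)"
proof -
  have R: "S / sqrt (S\<^sup>2 + l * S) = 1 / sqrt (1 + l / S)"
  proof -
    have "S\<^sup>2 + l * S = S\<^sup>2 * (1 + l / S)" using S by (simp add: field_simps power2_eq_square)
    then have "sqrt (S\<^sup>2 + l * S) = S * sqrt (1 + l / S)" using S by (simp add: real_sqrt_mult)
    moreover have "sqrt (1 + l / S) > 0"
    proof -
      have "l / S \<ge> 0" using S l by simp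
      then show ?thesis by simp
    qed
    ultimately show ?thesis using S by simp
  qed
  have lS: "l / S \<ge> 0" using S l by simp
  have Rpos: "1 / sqrt (1 + l / S) > 0" using lS by simp
  show ?thesis
  proof (cases "s > 0")
    case False
    then have "s / sqrt (s\<^sup>2 + q) \<le> 0" using q0 by (intro divide_nonpos_nonneg) (auto intro: add_nonneg_nonneg)
    then show ?thesis unfolding R using Rpos by linarith
  next
    case True
    have "s\<^sup>2 * (1 + l / S) \<le> s\<^sup>2 + q" using q S by (simp add: field_simps)
    then have "sqrt (s\<^sup>2 * (1 + l / S)) \<le> sqrt (s\<^sup>2 + q)" by (rule real_sqrt_le_mono)
    moreover have "sqrt (s\<^sup>2 * (1 + l / S)) = s * sqrt (1 + l / S)"
      using True by (simp add: real_sqrt_mult)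
    ultimately have le: "s * sqrt (1 + l / S) \<le> sqrt (s\<^sup>2 + q)" by simp
    have pos: "0 < s * sqrt (1 + l / S)" using True lS by simp
    have "s / sqrt (s\<^sup>2 + q) \<le> s / (s * sqrt (1 + l / S))"
    proof (rule divide_left_mono)
      have sq: "0 < sqrt (s\<^sup>2 + q)" using le pos by linarith
      show "0 < sqrt (s\<^sup>2 + q) * (s * sqrt (1 + l / S))" using mult_pos_pos[OF sq pos] .
    qed (use le True in auto)
    also have "\<dots> = 1 / sqrt (1 + l / S)" using True by simp
    finally show ?thesis using R by simp
  qed
qed

lemma final_value:
  fixes t :: nat
  shows "2 ^ t / sqrt ((2 ^ t)\<^sup>2 + lam t * 2 ^ t) = 1 / sqrt (real t / 4 ^ t * real ((2 * t) choose t) + 1)"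
proof -
  have S: "(2::real) ^ t > 0" by simp
  have "(2::real) ^ t * 2 ^ t = 4 ^ t" by (simp add: power_mult_distrib[symmetric])
  then have e: "lam t / 2 ^ t = real t / 4 ^ t * real ((2 * t) choose t)"
    unfolding lam_def by (simp add: field_simps)
  have "((2::real) ^ t)\<^sup>2 + lam t * 2 ^ t = (2 ^ t)\<^sup>2 * (1 + lam t / 2 ^ t)" using S by (simp add: field_simps power2_eq_square)
  then have "sqrt (((2::real) ^ t)\<^sup>2 + lam t * 2 ^ t) = 2 ^ t * sqrt (1 + lam t / 2 ^ t)" by (simp add: real_sqrt_mult)
  then show ?thesis using e by (simp add: add.commute)
qed



lemma (in prob_space) normal_facts:
  assumes D: "distributed M lborel Y std_normal_density"
  shows "integrable M Y" "integrable M (\<lambda>\<omega>. Y \<omega> * Y \<omega>)" "expectation Y = 0"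
    "expectation (\<lambda>\<omega>. Y \<omega> * Y \<omega>) = 1"
proof -
  have "integrable lborel (\<lambda>x. std_normal_density x * x ^ 1)" by (rule integrable_std_normal_moment)
  then show i1: "integrable M Y"
    using distributed_integrable[OF D, of "\<lambda>x. x ^ 1"] by (simp add: normal_density_nonneg)
  have "integrable lborel (\<lambda>x. std_normal_density x * x ^ 2)" by (rule integrable_std_normal_moment)
  then have "integrable M (\<lambda>\<omega>. Y \<omega> ^ 2)"
    using distributed_integrable[OF D, of "\<lambda>x. x ^ 2"] by (simp add: normal_density_nonneg)
  then show "integrable M (\<lambda>\<omega>. Y \<omega> * Y \<omega>)" by (simp add: power2_eq_square)
  show e: "expectation Y = 0" using D by (rule standard_normal_distributed_expectation)
  have "variance Y = 1" using D by (rule standard_normal_distributed_variance)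
  then show "expectation (\<lambda>\<omega>. Y \<omega> * Y \<omega>) = 1" using e by (simp add: power2_eq_square)
qed

lemma (in prob_space) pair_moment:
  assumes Zn: "\<And>k. k \<in> J \<Longrightarrow> distributed M lborel (Z k) std_normal_density"
    and ind: "indep_vars (\<lambda>_. borel) Z J" and k: "k \<in> J" and k': "k' \<in> J"
  shows "integrable M (\<lambda>\<omega>. Z k \<omega> * Z k' \<omega>)"
    "expectation (\<lambda>\<omega>. Z k \<omega> * Z k' \<omega>) = (if k = k' then 1 else 0)"
proof -
  have "integrable M (\<lambda>\<omega>. Z k \<omega> * Z k' \<omega>) \<and> expectation (\<lambda>\<omega>. Z k \<omega> * Z k' \<omega>) = (if k = k' then 1 else 0)"
  proof (cases "k = k'")
    case True
    then show ?thesis using normal_facts[OF Zn[OF k]] by simp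
  next
    case False
    have ind2: "indep_vars (\<lambda>_. borel) Z {k, k'}" by (rule indep_vars_subset[OF ind]) (use k k' in auto)
    have int: "\<And>i. i \<in> {k, k'} \<Longrightarrow> integrable M (Z i)" using normal_facts(1)[OF Zn] k k' by auto
    have p: "(\<lambda>\<omega>. \<Prod>i\<in>{k, k'}. Z i \<omega>) = (\<lambda>\<omega>. Z k \<omega> * Z k' \<omega>)" using False by simp
    have "integrable M (\<lambda>\<omega>. \<Prod>i\<in>{k, k'}. Z i \<omega>)"
      by (rule indep_vars_integrable) (use ind2 int in auto)
    moreover have "expectation (\<lambda>\<omega>. \<Prod>i\<in>{k, k'}. Z i \<omega>) = (\<Prod>i\<in>{k, k'}. expectation (Z i))"
      by (rule indep_vars_lebesgue_integral) (use ind2 int in auto)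
    moreover have "(\<Prod>i\<in>{k, k'}. expectation (Z i)) = 0"
      using normal_facts(3)[OF Zn[OF k]] False by simp
    ultimately show ?thesis unfolding p using False by simp
  qed
  then show "integrable M (\<lambda>\<omega>. Z k \<omega> * Z k' \<omega>)"
    "expectation (\<lambda>\<omega>. Z k \<omega> * Z k' \<omega>) = (if k = k' then 1 else 0)" by auto
qed

lemma (in prob_space) lin_moments:
  assumes Zn: "\<And>k. k \<in> J \<Longrightarrow> distributed M lborel (Z k) std_normal_density"
    and ind: "indep_vars (\<lambda>_. borel) Z J" and I: "finite I" "I \<subseteq> J"
  shows "expectation (\<lambda>\<omega>. \<Sum>k\<in>I. f k * Z k \<omega>) = 0"
    "expectation (\<lambda>\<omega>. (\<Sum>k\<in>I. f k * Z k \<omega>) * (\<Sum>k\<in>I. g k * Z k \<omega>)) = (\<Sum>k\<in>I. f k * g k)"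
proof -
  have intZ: "\<And>k. k \<in> I \<Longrightarrow> integrable M (Z k)" using normal_facts(1)[OF Zn] I by auto
  have "expectation (\<lambda>\<omega>. \<Sum>k\<in>I. f k * Z k \<omega>) = (\<Sum>k\<in>I. expectation (\<lambda>\<omega>. f k * Z k \<omega>))"
    by (rule Bochner_Integration.integral_sum) (use intZ in auto)
  also have "\<dots> = (\<Sum>k\<in>I. f k * expectation (Z k))" by simp
  also have "\<dots> = 0" using normal_facts(3)[OF Zn] I by (intro sum.neutral) auto
  finally show "expectation (\<lambda>\<omega>. \<Sum>k\<in>I. f k * Z k \<omega>) = 0" .
  have pm: "\<And>k k'. k \<in> I \<Longrightarrow> k' \<in> I \<Longrightarrow> integrable M (\<lambda>\<omega>. Z k \<omega> * Z k' \<omega>)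
      \<and> expectation (\<lambda>\<omega>. Z k \<omega> * Z k' \<omega>) = (if k = k' then 1 else 0)"
    using pair_moment[OF Zn ind] I by blast
  have "(\<lambda>\<omega>. (\<Sum>k\<in>I. f k * Z k \<omega>) * (\<Sum>k\<in>I. g k * Z k \<omega>))
      = (\<lambda>\<omega>. \<Sum>k\<in>I. \<Sum>k'\<in>I. f k * g k' * (Z k \<omega> * Z k' \<omega>))"
    by (simp add: sum_product algebra_simps)
  then have "expectation (\<lambda>\<omega>. (\<Sum>k\<in>I. f k * Z k \<omega>) * (\<Sum>k\<in>I. g k * Z k \<omega>))
      = expectation (\<lambda>\<omega>. \<Sum>k\<in>I. \<Sum>k'\<in>I. f k * g k' * (Z k \<omega> * Z k' \<omega>))" by simp
  also have "\<dots> = (\<Sum>k\<in>I. expectation (\<lambda>\<omega>. \<Sum>k'\<in>I. f k * g k' * (Z k \<omega> * Z k' \<omega>)))"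
    by (rule Bochner_Integration.integral_sum) (use pm in auto)
  also have "\<dots> = (\<Sum>k\<in>I. \<Sum>k'\<in>I. expectation (\<lambda>\<omega>. f k * g k' * (Z k \<omega> * Z k' \<omega>)))"
    by (intro sum.cong refl Bochner_Integration.integral_sum) (use pm in auto)
  also have "\<dots> = (\<Sum>k\<in>I. \<Sum>k'\<in>I. f k * g k' * (if k = k' then 1 else 0))"
    by (intro sum.cong refl) (use pm in auto)
  also have "\<dots> = (\<Sum>k\<in>I. f k * g k)"
    by (intro sum.cong refl) (simp add: I(1) if_distrib sum.delta cong: if_cong)
  finally show "expectation (\<lambda>\<omega>. (\<Sum>k\<in>I. f k * Z k \<omega>) * (\<Sum>k\<in>I. g k * Z k \<omega>)) = (\<Sum>k\<in>I. f k * g k)" .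
qed



lemma W_ind_sum:
  assumes "ed \<in> EN N"
  shows "(\<Sum>e\<in>EN N. (if e = ed then 1 else 0) * W e \<omega>) = (W ed \<omega> :: real)"
proof -
  have "(\<Sum>e\<in>EN N. (if e = ed then 1 else 0) * W e \<omega>) = (\<Sum>e\<in>EN N. if e = ed then W e \<omega> else 0)"
    by (rule sum.cong) auto
  then show ?thesis using assms by (simp add: sum.delta[OF finite_EN])
qed

lemma gbX_repr:
  "le2 v (N,N) \<Longrightarrow> gbX 1 (1/2) X0 W v \<omega> = X0 \<omega> + (\<Sum>e\<in>EN N. cf v e * W e \<omega>)"
proof (induction v rule: pair_induct)
  case 1
  then show ?case by simp
next
  case (2 i)
  have ed: "((i,0),(Suc i,0)) \<in> EN N" using 2(2) by (auto simp: EN_def cover_pairs_def le2_def)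
  have IH: "gbX 1 (1/2) X0 W (i,0) \<omega> = X0 \<omega> + (\<Sum>e\<in>EN N. cf (i,0) e * W e \<omega>)"
    using 2 by (auto simp: le2_def)
  have "(\<Sum>e\<in>EN N. cf (Suc i, 0) e * W e \<omega>) = (\<Sum>e\<in>EN N. cf (i,0) e * W e \<omega>)
     + (\<Sum>e\<in>EN N. (if e = ((i,0),(Suc i,0)) then 1 else 0) * W e \<omega>)"
    by (simp add: sum.distrib distrib_right)
  then show ?case using IH W_ind_sum[OF ed, of W \<omega>] by simp
next
  case (3 j)
  have ed: "((0,j),(0,Suc j)) \<in> EN N" using 3(2) by (auto simp: EN_def cover_pairs_def le2_def)
  have IH: "gbX 1 (1/2) X0 W (0,j) \<omega> = X0 \<omega> + (\<Sum>e\<in>EN N. cf (0,j) e * W e \<omega>)"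
    using 3 by (auto simp: le2_def)
  have "(\<Sum>e\<in>EN N. cf (0, Suc j) e * W e \<omega>) = (\<Sum>e\<in>EN N. cf (0,j) e * W e \<omega>)
     + (\<Sum>e\<in>EN N. (if e = ((0,j),(0,Suc j)) then 1 else 0) * W e \<omega>)"
    by (simp add: sum.distrib distrib_right)
  then show ?case using IH W_ind_sum[OF ed, of W \<omega>] by simp
next
  case (4 i j)
  let ?e1 = "((i,Suc j),(Suc i,Suc j))" and ?e2 = "((Suc i,j),(Suc i,Suc j))"
  have ed1: "?e1 \<in> EN N" using 4(3) by (auto simp: EN_def cover_pairs_def le2_def)
  have ed2: "?e2 \<in> EN N" using 4(3) by (auto simp: EN_def cover_pairs_def le2_def)
  have IH1: "gbX 1 (1/2) X0 W (i,Suc j) \<omega> = X0 \<omega> + (\<Sum>e\<in>EN N. cf (i,Suc j) e * W e \<omega>)"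
    using 4 by (auto simp: le2_def)
  have IH2: "gbX 1 (1/2) X0 W (Suc i,j) \<omega> = X0 \<omega> + (\<Sum>e\<in>EN N. cf (Suc i,j) e * W e \<omega>)"
    using 4 by (auto simp: le2_def)
  have "(\<Sum>e\<in>EN N. cf (Suc i, Suc j) e * W e \<omega>) = 1/2 * ((\<Sum>e\<in>EN N. cf (i,Suc j) e * W e \<omega>)
     + (\<Sum>e\<in>EN N. (if e = ?e1 then 1 else 0) * W e \<omega>) + (\<Sum>e\<in>EN N. cf (Suc i,j) e * W e \<omega>)
     + (\<Sum>e\<in>EN N. (if e = ?e2 then 1 else 0) * W e \<omega>))"
    by (simp add: sum.distrib distrib_right sum_distrib_left algebra_simps)
  moreover have "gbX 1 (1/2) X0 W (Suc i,Suc j) \<omega> = 1/2 * ((gbX 1 (1/2) X0 W (i,Suc j) \<omega> + W ?e1 \<omega>) + (gbX 1 (1/2) X0 W (Suc i,j) \<omega> + W ?e2 \<omega>))"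
    by simp
  ultimately show ?case using IH1 IH2 W_ind_sum[OF ed1, of W \<omega>] W_ind_sum[OF ed2, of W \<omega>]
    by (simp add: field_simps)
qed

lemma zeta_repr:
  "(\<Sum>i\<le>t. c i * gbX 1 (1/2) X0 W (i, t-i) \<omega>) = (\<Sum>i\<le>t. c i) * X0 \<omega> + (\<Sum>e\<in>EN t. acoef t c e * W e \<omega>)"
proof -
  have "(\<Sum>i\<le>t. c i * gbX 1 (1/2) X0 W (i, t-i) \<omega>) = (\<Sum>i\<le>t. c i * (X0 \<omega> + (\<Sum>e\<in>EN t. cf (i, t-i) e * W e \<omega>)))"
    by (rule sum.cong) (auto simp: gbX_repr le2_def)
  also have "\<dots> = (\<Sum>i\<le>t. c i) * X0 \<omega> + (\<Sum>i\<le>t. \<Sum>e\<in>EN t. c i * cf (i, t-i) e * W e \<omega>)"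
    by (simp add: sum.distrib distrib_left sum_distrib_left sum_distrib_right algebra_simps)
  also have "(\<Sum>i\<le>t. \<Sum>e\<in>EN t. c i * cf (i, t-i) e * W e \<omega>) = (\<Sum>e\<in>EN t. acoef t c e * W e \<omega>)"
    unfolding acoef_def by (subst sum.swap) (simp add: sum_distrib_right)
  finally show ?thesis .
qed

lemma (in prob_space) combo:
  fixes X0 :: "'a \<Rightarrow> real" and W :: "'e \<Rightarrow> 'a \<Rightarrow> real"
  assumes X0n: "distributed M lborel X0 std_normal_density"
    and Wn: "\<And>e. e \<in> CP \<Longrightarrow> distributed M lborel (W e) std_normal_density"
    and ind: "indep_vars (\<lambda>_. borel) (case_sum (\<lambda>_. X0) W) (Inl ` (UNIV :: 'b set) \<union> Inr ` CP)"
    and E: "finite E" "E \<subseteq> CP"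
  shows "expectation (\<lambda>\<omega>. s * X0 \<omega> + (\<Sum>e\<in>E. a e * W e \<omega>)) = 0"
    "expectation (\<lambda>\<omega>. (s * X0 \<omega> + (\<Sum>e\<in>E. a e * W e \<omega>)) * (s' * X0 \<omega> + (\<Sum>e\<in>E. a' e * W e \<omega>)))
       = s * s' + (\<Sum>e\<in>E. a e * a' e)"
proof -
  define Z :: "'b + 'e \<Rightarrow> 'a \<Rightarrow> real" where "Z = case_sum (\<lambda>_. X0) W"
  define J :: "('b + 'e) set" where "J = Inl ` UNIV \<union> Inr ` CP"
  define I :: "('b + 'e) set" where "I = insert (Inl undefined) (Inr ` E)"
  have Zn: "\<And>k. k \<in> J \<Longrightarrow> distributed M lborel (Z k) std_normal_density"
    using X0n Wn by (auto simp: J_def Z_def)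
  have indZ: "indep_vars (\<lambda>_. borel) Z J" using ind by (simp add: Z_def J_def)
  have fI: "finite I" using E by (simp add: I_def)
  have IJ: "I \<subseteq> J" using E by (auto simp: I_def J_def)
  have rep: "\<And>s a \<omega>. s * X0 \<omega> + (\<Sum>e\<in>E. a e * W e \<omega>) = (\<Sum>k\<in>I. case_sum (\<lambda>_. s) a k * Z k \<omega>)"
  proof -
    fix s :: real and a :: "'e \<Rightarrow> real" and \<omega>
    have "(\<Sum>k\<in>I. case_sum (\<lambda>_. s) a k * Z k \<omega>) = s * X0 \<omega> + (\<Sum>k\<in>Inr ` E. case_sum (\<lambda>_. s) a k * Z k \<omega>)"
      unfolding I_def using E by (subst sum.insert) (auto simp: Z_def)
    also have "(\<Sum>k\<in>Inr ` E. case_sum (\<lambda>_. s) a k * Z k \<omega>) = (\<Sum>e\<in>E. a e * W e \<omega>)"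
      by (subst sum.reindex) (auto simp: Z_def inj_on_def)
    finally show "s * X0 \<omega> + (\<Sum>e\<in>E. a e * W e \<omega>) = (\<Sum>k\<in>I. case_sum (\<lambda>_. s) a k * Z k \<omega>)" by simp
  qed
  have prods: "(\<Sum>k\<in>I. case_sum (\<lambda>_. s) a k * case_sum (\<lambda>_. s') a' k) = s * s' + (\<Sum>e\<in>E. a e * a' e)"
  proof -
    have "(\<Sum>k\<in>I. case_sum (\<lambda>_. s) a k * case_sum (\<lambda>_. s') a' k) = s * s' + (\<Sum>k\<in>(Inr ` E :: ('b + 'e) set). case_sum (\<lambda>_. s) a k * case_sum (\<lambda>_. s') a' k)"
      unfolding I_def using E by (subst sum.insert) auto
    also have "(\<Sum>k\<in>(Inr ` E :: ('b + 'e) set). case_sum (\<lambda>_. s) a k * case_sum (\<lambda>_. s') a' k) = (\<Sum>e\<in>E. a e * a' e)"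
      by (subst sum.reindex) (auto simp: inj_on_def)
    finally show ?thesis .
  qed
  show "expectation (\<lambda>\<omega>. s * X0 \<omega> + (\<Sum>e\<in>E. a e * W e \<omega>)) = 0"
    unfolding rep by (rule lin_moments(1)[OF Zn indZ fI IJ])
  show "expectation (\<lambda>\<omega>. (s * X0 \<omega> + (\<Sum>e\<in>E. a e * W e \<omega>)) * (s' * X0 \<omega> + (\<Sum>e\<in>E. a' e * W e \<omega>)))
       = s * s' + (\<Sum>e\<in>E. a e * a' e)"
    unfolding rep using lin_moments(2)[OF Zn indZ fI IJ] prods by simp
qed



lemma qhat: "(\<Sum>e\<in>EN t. (acoef t (chat t) e)\<^sup>2) = lam t * 2 ^ t"
  using cross_sum[of t "chat t"] sum_chat[of t] by (simp add: power2_eq_square)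

lemma lam_nonneg: "lam t \<ge> 0" by (simp add: lam_def)

theorem mainTheorem2:
  fixes M :: "'a measure"
    and X0 :: "'a \<Rightarrow> real"
    and W :: "(nat \<times> nat) \<times> (nat \<times> nat) \<Rightarrow> 'a \<Rightarrow> real"
    and t :: nat
  assumes "prob_space M"
    and "distributed M lborel X0 std_normal_density"
    and "\<And>e. e \<in> cover_pairs \<Longrightarrow> distributed M lborel (W e) std_normal_density"
    and "prob_space.indep_vars M (\<lambda>_. borel) (case_sum (\<lambda>_. X0) W)
           (Inl ` UNIV \<union> Inr ` cover_pairs)"
  shows "(\<forall>c :: nat \<Rightarrow> real. (\<exists>i\<le>t. c i \<noteq> 0) \<longrightarrow>
            Cov M (\<lambda>\<omega>. \<Sum>i\<le>t. c i * gbX 1 (1/2) X0 W (i, t - i) \<omega>) X0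
              / sqrt (Var M (\<lambda>\<omega>. \<Sum>i\<le>t. c i * gbX 1 (1/2) X0 W (i, t - i) \<omega>))
            \<le> Cov M (\<lambda>\<omega>. \<Sum>i\<le>t. real (t choose i) * gbX 1 (1/2) X0 W (i, t - i) \<omega>) X0
              / sqrt (Var M (\<lambda>\<omega>. \<Sum>i\<le>t. real (t choose i) * gbX 1 (1/2) X0 W (i, t - i) \<omega>)))
       \<and> Cov M (\<lambda>\<omega>. \<Sum>i\<le>t. real (t choose i) * gbX 1 (1/2) X0 W (i, t - i) \<omega>) X0
              / sqrt (Var M (\<lambda>\<omega>. \<Sum>i\<le>t. real (t choose i) * gbX 1 (1/2) X0 W (i, t - i) \<omega>))
         = 1 / sqrt (real t / 4 ^ t * real ((2 * t) choose t) + 1)"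
proof -
  interpret prob_space M by (rule assms(1))
  have E: "finite (EN t)" "EN t \<subseteq> cover_pairs" by (rule finite_EN) (auto simp: EN_def)
  note cb = combo[OF assms(2) assms(3) assms(4) E]
  define zeta where "zeta c = (\<lambda>\<omega>. \<Sum>i\<le>t. c i * gbX 1 (1/2) X0 W (i, t - i) \<omega>)" for c :: "nat \<Rightarrow> real"
  have zeta_eq: "zeta c = (\<lambda>\<omega>. (\<Sum>i\<le>t. c i) * X0 \<omega> + (\<Sum>e\<in>EN t. acoef t c e * W e \<omega>))" for c
    unfolding zeta_def by (simp add: zeta_repr)
  have eX0: "Expect M X0 = 0" unfolding Expect_def using cb(1)[of 1 "\<lambda>_. 0"] by simp
  have ez: "Expect M (zeta c) = 0" for c unfolding Expect_def zeta_eq by (rule cb(1))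
  have cov: "Cov M (zeta c) X0 = (\<Sum>i\<le>t. c i)" for c
  proof -
    have "Cov M (zeta c) X0 = expectation (\<lambda>\<omega>. zeta c \<omega> * X0 \<omega>)" unfolding Cov_def ez eX0 by simp
    also have "\<dots> = expectation (\<lambda>\<omega>. ((\<Sum>i\<le>t. c i) * X0 \<omega> + (\<Sum>e\<in>EN t. acoef t c e * W e \<omega>))
         * (1 * X0 \<omega> + (\<Sum>e\<in>EN t. 0 * W e \<omega>)))" by (simp add: zeta_eq)
    also have "\<dots> = (\<Sum>i\<le>t. c i) * 1 + (\<Sum>e\<in>EN t. acoef t c e * 0)" by (rule cb(2))
    finally show ?thesis by simp
  qed
  have var: "Var M (zeta c) = (\<Sum>i\<le>t. c i)\<^sup>2 + (\<Sum>e\<in>EN t. (acoef t c e)\<^sup>2)" for c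
  proof -
    have "Var M (zeta c) = expectation (\<lambda>\<omega>. zeta c \<omega> * zeta c \<omega>)" unfolding Var_def ez by (simp add: power2_eq_square)
    also have "\<dots> = expectation (\<lambda>\<omega>. ((\<Sum>i\<le>t. c i) * X0 \<omega> + (\<Sum>e\<in>EN t. acoef t c e * W e \<omega>))
         * ((\<Sum>i\<le>t. c i) * X0 \<omega> + (\<Sum>e\<in>EN t. acoef t c e * W e \<omega>)))" by (simp add: zeta_eq)
    also have "\<dots> = (\<Sum>i\<le>t. c i) * (\<Sum>i\<le>t. c i) + (\<Sum>e\<in>EN t. acoef t c e * acoef t c e)" by (rule cb(2))
    finally show ?thesis by (simp add: power2_eq_square)
  qed
  have h2: "(\<lambda>\<omega>. \<Sum>i\<le>t. c i * gbX 1 (1/2) X0 W (i, t - i) \<omega>) = zeta c" for c by (simp add: zeta_def)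
  have h1: "(\<lambda>\<omega>. \<Sum>i\<le>t. real (t choose i) * gbX 1 (1/2) X0 W (i, t - i) \<omega>) = zeta (chat t)"
    by (simp add: zeta_def chat_def)
  have hat: "Cov M (zeta (chat t)) X0 / sqrt (Var M (zeta (chat t)))
      = 2 ^ t / sqrt ((2 ^ t)\<^sup>2 + lam t * 2 ^ t)"
    unfolding cov var sum_chat qhat ..
  have ineq: "Cov M (zeta c) X0 / sqrt (Var M (zeta c)) \<le> Cov M (zeta (chat t)) X0 / sqrt (Var M (zeta (chat t)))" for c
    unfolding cov var sum_chat qhat
    by (rule final_ineq) (auto simp: lam_nonneg Q_lower intro: sum_nonneg)
  show ?thesis unfolding h1 h2 using ineq hat final_value by simp
qed


end
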